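(* Let $p_1,\dots,p_m\in\mathbb R$, let $\sigma$ be any permutation with $p_{\sigma(1)}\le\dots\le p_{\sigma(m)}$, $p_{(k)}=p_{\sigma(k)}$, $R_k=\{\sigma(1),\dots,\sigma(k)\}$, $R_k^\dagger=\{i:p_i\le p_{(k)}\}$, and let $f:\mathbb R\to\mathbb R$ be any function. Consider the reference families $\mathfrak R=(R_k,f(p_{(k)})\wedge k)_{1\le k\le m}$, $\mathfrak R^\sim=(R_k,f(p_{(k)}))_{1\le k\le m}$ and $\mathfrak R^\dagger=(R_k^\dagger,f(p_{(k)}))_{1\le k\le m}$. Then for all $S\subseteq\{1,\dots,m\}$, $$\hat V^{\mathrm{JER}}_{\mathfrak R}(S)=\hat V^{\mathrm{JER}}_{\mathfrak R^\sim}(S)=\hat V^{\mathrm{JER}}_{\mathfrak R^\dagger}(S).$$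
   Context: For a reference family $\mathfrak R=(R_k,\zeta_k)_{k\in\mathcal K}$ (subsets $R_k\subseteq\{1,\dots,m\}$, reals $\zeta_k$): $\mathfrak A(\mathfrak R)=\{A\subseteq\{1,\dots,m\}:\forall k\in\mathcal K,\ |R_k\cap A|\le\zeta_k\}$ and $\hat V^{\mathrm{JER}}_{\mathfrak R}(S)=\max_{A\in\mathfrak A(\mathfrak R)}|S\cap A|$ (the statement is understood with any fixed convention for the maximum over an empty set). *)

theory Defs
  imports Main "HOL.Real"
begin

definition jer_A :: "nat \<Rightarrow> 'k set \<Rightarrow> ('k \<Rightarrow> nat set) \<Rightarrow> ('k \<Rightarrow> real) \<Rightarrow> nat set set" where
  "jer_A m K R \<zeta> = {A. A \<subseteq> {1..m} \<and> (\<forall>k\<in>K. real (card (R k \<inter> A)) \<le> \<zeta> k)}"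

text \<open>Max over the empty set is the fixed (unspecified) value Max {}.\<close>
definition jer_V :: "nat \<Rightarrow> 'k set \<Rightarrow> ('k \<Rightarrow> nat set) \<Rightarrow> ('k \<Rightarrow> real) \<Rightarrow> nat set \<Rightarrow> nat" where
  "jer_V m K R \<zeta> S = Max ((\<lambda>A. card (S \<inter> A)) ` jer_A m K R \<zeta>)"

end

theory Submission
  imports Defs
begin

lemma card_prefix_le: "card (\<sigma> ` {1..k} \<inter> A) \<le> (k::nat)"
proof -
  have "card (\<sigma> ` {1..k} \<inter> A) \<le> card (\<sigma> ` {1..k})"
    by (intro card_mono) auto
  also have "\<dots> \<le> card {1..k}" by (rule card_image_le) simp
  finally show ?thesis by simp
qed

lemma dagger_is_prefix:
  fixes m :: nat and p :: "nat \<Rightarrow> real" and \<sigma> :: "nat \<Rightarrow> nat"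
  assumes perm: "bij_betw \<sigma> {1..m} {1..m}"
    and sorted: "\<And>i j. 1 \<le> i \<Longrightarrow> i \<le> j \<Longrightarrow> j \<le> m \<Longrightarrow> p (\<sigma> i) \<le> p (\<sigma> j)"
    and k: "k \<in> {1..m}"
  shows "\<exists>k'\<in>{1..m}. p (\<sigma> k') = p (\<sigma> k) \<and> {i\<in>{1..m}. p i \<le> p (\<sigma> k)} = \<sigma> ` {1..k'}"
proof -
  define J where "J = {j\<in>{1..m}. p (\<sigma> j) \<le> p (\<sigma> k)}"
  have fin: "finite J" unfolding J_def by auto
  have kJ: "k \<in> J" using k unfolding J_def by auto
  define k' where "k' = Max J"
  have k'J: "k' \<in> J" unfolding k'_def using fin kJ by (intro Max_in) auto
  have kk': "k \<le> k'" unfolding k'_def using fin kJ by auto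
  have k'm: "k' \<in> {1..m}" using k'J unfolding J_def by auto
  have eq: "p (\<sigma> k') = p (\<sigma> k)"
    using k'J sorted[of k k'] kk' k k'm unfolding J_def by force
  have "{i\<in>{1..m}. p i \<le> p (\<sigma> k)} = \<sigma> ` {1..k'}"
  proof
    show "{i\<in>{1..m}. p i \<le> p (\<sigma> k)} \<subseteq> \<sigma> ` {1..k'}"
    proof
      fix i assume i: "i \<in> {i\<in>{1..m}. p i \<le> p (\<sigma> k)}"
      hence "i \<in> \<sigma> ` {1..m}" using perm unfolding bij_betw_def by auto
      then obtain j where j: "j \<in> {1..m}" "\<sigma> j = i" by auto
      have "j \<in> J" using i j unfolding J_def by auto
      hence "j \<le> k'" unfolding k'_def using fin by auto
      thus "i \<in> \<sigma> ` {1..k'}" using j by auto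
    qed
  next
    show "\<sigma> ` {1..k'} \<subseteq> {i\<in>{1..m}. p i \<le> p (\<sigma> k)}"
    proof
      fix i assume "i \<in> \<sigma> ` {1..k'}"
      then obtain j where j: "j \<in> {1..k'}" "i = \<sigma> j" by auto
      have "j \<in> {1..m}" using j k'm by auto
      hence "i \<in> {1..m}" using perm j unfolding bij_betw_def by auto
      moreover have "p i \<le> p (\<sigma> k)" using sorted[of j k'] j k'm eq by auto
      ultimately show "i \<in> {i\<in>{1..m}. p i \<le> p (\<sigma> k)}" by auto
    qed
  qed
  thus ?thesis using k'm eq by blast
qed

theorem mainTheorem20:
  fixes m :: nat and p :: "nat \<Rightarrow> real" and \<sigma> :: "nat \<Rightarrow> nat"
    and f :: "real \<Rightarrow> real" and S :: "nat set"
  assumes perm: "bij_betw \<sigma> {1..m} {1..m}"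
    and sorted: "\<And>i j. 1 \<le> i \<Longrightarrow> i \<le> j \<Longrightarrow> j \<le> m \<Longrightarrow> p (\<sigma> i) \<le> p (\<sigma> j)"
    and S: "S \<subseteq> {1..m}"
  shows "jer_V m {1..m} (\<lambda>k. \<sigma> ` {1..k}) (\<lambda>k. min (f (p (\<sigma> k))) (real k)) S
           = jer_V m {1..m} (\<lambda>k. \<sigma> ` {1..k}) (\<lambda>k. f (p (\<sigma> k))) S
       \<and> jer_V m {1..m} (\<lambda>k. \<sigma> ` {1..k}) (\<lambda>k. f (p (\<sigma> k))) S
           = jer_V m {1..m} (\<lambda>k. {i\<in>{1..m}. p i \<le> p (\<sigma> k)}) (\<lambda>k. f (p (\<sigma> k))) S"
proof -
  have e1: "jer_A m {1..m} (\<lambda>k. \<sigma> ` {1..k}) (\<lambda>k. min (f (p (\<sigma> k))) (real k))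
      = jer_A m {1..m} (\<lambda>k. \<sigma> ` {1..k}) (\<lambda>k. f (p (\<sigma> k)))"
    unfolding jer_A_def
  proof (intro Collect_cong conj_cong refl ball_cong)
    fix A k
    have "real (card (\<sigma> ` {1..k} \<inter> A)) \<le> real k" using card_prefix_le by simp
    thus "(real (card (\<sigma> ` {1..k} \<inter> A)) \<le> min (f (p (\<sigma> k))) (real k)) =
          (real (card (\<sigma> ` {1..k} \<inter> A)) \<le> f (p (\<sigma> k)))" by simp
  qed
  have sub: "\<sigma> ` {1..k} \<subseteq> {i\<in>{1..m}. p i \<le> p (\<sigma> k)}" if k: "k \<in> {1..m}" for k
  proof
    fix i assume "i \<in> \<sigma> ` {1..k}"
    then obtain j where j: "j \<in> {1..k}" "i = \<sigma> j" by auto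
    have "j \<in> {1..m}" using j k by auto
    hence "i \<in> {1..m}" using perm j unfolding bij_betw_def by auto
    moreover have "p i \<le> p (\<sigma> k)" using sorted[of j k] j k by auto
    ultimately show "i \<in> {i\<in>{1..m}. p i \<le> p (\<sigma> k)}" by auto
  qed
  have e2: "jer_A m {1..m} (\<lambda>k. \<sigma> ` {1..k}) (\<lambda>k. f (p (\<sigma> k)))
      = jer_A m {1..m} (\<lambda>k. {i\<in>{1..m}. p i \<le> p (\<sigma> k)}) (\<lambda>k. f (p (\<sigma> k)))"
  proof
    show "jer_A m {1..m} (\<lambda>k. \<sigma> ` {1..k}) (\<lambda>k. f (p (\<sigma> k)))
      \<subseteq> jer_A m {1..m} (\<lambda>k. {i\<in>{1..m}. p i \<le> p (\<sigma> k)}) (\<lambda>k. f (p (\<sigma> k)))"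
    proof
      fix A assume A: "A \<in> jer_A m {1..m} (\<lambda>k. \<sigma> ` {1..k}) (\<lambda>k. f (p (\<sigma> k)))"
      show "A \<in> jer_A m {1..m} (\<lambda>k. {i\<in>{1..m}. p i \<le> p (\<sigma> k)}) (\<lambda>k. f (p (\<sigma> k)))"
        unfolding jer_A_def
      proof (intro CollectI conjI ballI)
        show "A \<subseteq> {1..m}" using A unfolding jer_A_def by auto
        fix k assume k: "k \<in> {1..m}"
        obtain k' where k': "k' \<in> {1..m}" "p (\<sigma> k') = p (\<sigma> k)"
          "{i\<in>{1..m}. p i \<le> p (\<sigma> k)} = \<sigma> ` {1..k'}"
          using dagger_is_prefix[of \<sigma> m p k, OF perm sorted k] by blast
        have "real (card (\<sigma> ` {1..k'} \<inter> A)) \<le> f (p (\<sigma> k'))"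
          using A k'(1) unfolding jer_A_def by auto
        thus "real (card ({i\<in>{1..m}. p i \<le> p (\<sigma> k)} \<inter> A)) \<le> f (p (\<sigma> k))"
          using k' by simp
      qed
    qed
  next
    show "jer_A m {1..m} (\<lambda>k. {i\<in>{1..m}. p i \<le> p (\<sigma> k)}) (\<lambda>k. f (p (\<sigma> k)))
      \<subseteq> jer_A m {1..m} (\<lambda>k. \<sigma> ` {1..k}) (\<lambda>k. f (p (\<sigma> k)))"
    proof
      fix A assume A: "A \<in> jer_A m {1..m} (\<lambda>k. {i\<in>{1..m}. p i \<le> p (\<sigma> k)}) (\<lambda>k. f (p (\<sigma> k)))"
      show "A \<in> jer_A m {1..m} (\<lambda>k. \<sigma> ` {1..k}) (\<lambda>k. f (p (\<sigma> k)))"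
        unfolding jer_A_def
      proof (intro CollectI conjI ballI)
        show "A \<subseteq> {1..m}" using A unfolding jer_A_def by auto
        fix k assume k: "k \<in> {1..m}"
        have "card (\<sigma> ` {1..k} \<inter> A) \<le> card ({i\<in>{1..m}. p i \<le> p (\<sigma> k)} \<inter> A)"
          using sub[OF k] by (intro card_mono) auto
        moreover have "real (card ({i\<in>{1..m}. p i \<le> p (\<sigma> k)} \<inter> A)) \<le> f (p (\<sigma> k))"
          using A k unfolding jer_A_def by auto
        ultimately show "real (card (\<sigma> ` {1..k} \<inter> A)) \<le> f (p (\<sigma> k))" by linarith
      qed
    qed
  qed
  show ?thesis unfolding jer_V_def e1 e2 by simp
qed

end
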